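(* Let $F:\mathbb R^d\to\mathbb R$ be continuously differentiable with $\|\nabla F(x)-\nabla F(y)\|\le(K_0+K_1\|\nabla F(x)\|)\|x-y\|$ for all $x,y$. Let $\gamma>0$, let $\{m_t\}$ be an arbitrary sequence of nonzero vectors, and let $w_{t+1}=w_t-\gamma\, m_{t+1}/\|m_{t+1}\|$ starting from $w_0$. Define $\delta_t=m_{t+1}-\nabla F(w_t)$. Then for every $t$, $$F(w_{t+1})-F(w_t)\le-\Big(\gamma-\tfrac12K_1\gamma^2\Big)\|\nabla F(w_t)\|+\tfrac12K_0\gamma^2+2\gamma\|\delta_t\|,$$ and consequently, for every $T\ge1$, $$\Big(1-\tfrac12K_1\gamma\Big)\sum_{t=0}^{T-1}\|\nabla F(w_t)\|\le\frac{F(w_0)-F(w_T)}{\gamma}+\tfrac12K_0T\gamma+2\sum_{t=0}^{T-1}\|\delta_t\|.$$ *)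

theory Defs
  imports "HOL-Analysis.Analysis"
begin

end

theory Submission
  imports Defs
begin

lemma descent:
  fixes F :: "real ^ 'd \<Rightarrow> real"
    and gradF :: "real ^ 'd \<Rightarrow> real ^ 'd"
    and K0 K1 :: real and x d :: "real ^ 'd"
  assumes grad: "\<And>x. (F has_derivative (\<lambda>h. gradF x \<bullet> h)) (at x)"
    and smooth: "\<And>x y. norm (gradF x - gradF y) \<le> (K0 + K1 * norm (gradF x)) * norm (x - y)"
  shows "F (x + d) - F x \<le> gradF x \<bullet> d + (K0 + K1 * norm (gradF x)) * norm d ^ 2 / 2"
proof -
  define C where "C = (K0 + K1 * norm (gradF x)) * norm d ^ 2"
  define \<phi> where "\<phi> s = F (x + s *\<^sub>R d) - F x - s * (gradF x \<bullet> d) - C * s^2 / 2" for s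
  have D: "(\<phi> has_real_derivative (gradF (x + s *\<^sub>R d) \<bullet> d - gradF x \<bullet> d - C * s)) (at s)" for s
  proof -
    have l: "((\<lambda>s. x + s *\<^sub>R d) has_derivative (\<lambda>h. h *\<^sub>R d)) (at s)"
      by (auto intro!: derivative_eq_intros)
    have c: "((\<lambda>s. F (x + s *\<^sub>R d)) has_derivative (\<lambda>h. gradF (x + s *\<^sub>R d) \<bullet> (h *\<^sub>R d))) (at s)"
      using has_derivative_compose[OF l grad] .
    have c2: "((\<lambda>s. F (x + s *\<^sub>R d)) has_real_derivative (gradF (x + s *\<^sub>R d) \<bullet> d)) (at s)"
      unfolding has_field_derivative_def using c by (simp add: mult.commute[of _ "gradF (x + s *\<^sub>R d) \<bullet> d"])
    show ?thesis unfolding \<phi>_def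
      by (rule derivative_eq_intros c2 | simp)+
  qed
  have "\<phi> 1 \<le> \<phi> 0"
  proof (rule DERIV_nonpos_imp_nonincreasing[of 0 1 \<phi>])
    fix s :: real assume s: "0 \<le> s" "s \<le> 1"
    have "gradF (x + s *\<^sub>R d) \<bullet> d - gradF x \<bullet> d = (gradF (x + s *\<^sub>R d) - gradF x) \<bullet> d"
      by (simp add: inner_diff_left)
    also have "\<dots> \<le> norm (gradF (x + s *\<^sub>R d) - gradF x) * norm d"
      by (rule norm_cauchy_schwarz)
    also have "norm (gradF (x + s *\<^sub>R d) - gradF x) = norm (gradF x - gradF (x + s *\<^sub>R d))"
      by (rule norm_minus_commute)
    also have "\<dots> \<le> (K0 + K1 * norm (gradF x)) * norm (x - (x + s *\<^sub>R d))"
      by (rule smooth)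
    also have "norm (x - (x + s *\<^sub>R d)) = s * norm d" using s by simp
    finally have "gradF (x + s *\<^sub>R d) \<bullet> d - gradF x \<bullet> d \<le> (K0 + K1 * norm (gradF x)) * (s * norm d) * norm d"
      by (simp add: mult_right_mono)
    also have "\<dots> = C * s" unfolding C_def by (simp add: power2_eq_square algebra_simps)
    finally show "\<exists>y. DERIV \<phi> s :> y \<and> y \<le> 0" using D by fastforce
  qed simp
  then show ?thesis unfolding \<phi>_def C_def by simp
qed

theorem lemma3p8:
  fixes F :: "real ^ 'd \<Rightarrow> real"
    and gradF :: "real ^ 'd \<Rightarrow> real ^ 'd"
    and K0 K1 \<gamma> :: real
    and m w :: "nat \<Rightarrow> real ^ 'd"
  assumes grad: "\<And>x. (F has_derivative (\<lambda>h. gradF x \<bullet> h)) (at x)"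
    and cont: "continuous_on UNIV gradF"
    and smooth: "\<And>x y. norm (gradF x - gradF y) \<le> (K0 + K1 * norm (gradF x)) * norm (x - y)"
    and gamma_pos: "\<gamma> > 0"
    and m_nz: "\<And>t. m t \<noteq> 0"
    and w_step: "\<And>t. w (Suc t) = w t - (\<gamma> / norm (m (Suc t))) *\<^sub>R m (Suc t)"
  shows "(\<forall>t. F (w (Suc t)) - F (w t)
            \<le> - (\<gamma> - K1 * \<gamma>^2 / 2) * norm (gradF (w t)) + K0 * \<gamma>^2 / 2
               + 2 * \<gamma> * norm (m (Suc t) - gradF (w t)))
       \<and> (\<forall>T\<ge>1. (1 - K1 * \<gamma> / 2) * (\<Sum>t<T. norm (gradF (w t)))
            \<le> (F (w 0) - F (w T)) / \<gamma> + K0 * real T * \<gamma> / 2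
               + 2 * (\<Sum>t<T. norm (m (Suc t) - gradF (w t))))"
proof -
  have step: "F (w (Suc t)) - F (w t)
            \<le> - (\<gamma> - K1 * \<gamma>^2 / 2) * norm (gradF (w t)) + K0 * \<gamma>^2 / 2
               + 2 * \<gamma> * norm (m (Suc t) - gradF (w t))" for t
  proof -
    define g where "g = gradF (w t)"
    define mm where "mm = m (Suc t)"
    define u where "u = (1 / norm mm) *\<^sub>R mm"
    have mnz: "mm \<noteq> 0" unfolding mm_def by (rule m_nz)
    have nu: "norm u = 1" unfolding u_def using mnz by simp
    define d where "d = - \<gamma> *\<^sub>R u"
    have wd: "w (Suc t) = w t + d" unfolding d_def u_def mm_def w_step
      by (simp add: algebra_simps)
    have nd: "norm d = \<gamma>" unfolding d_def using nu gamma_pos by simp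
    have mu: "mm \<bullet> u = norm mm" unfolding u_def using mnz
      by (simp add: inner_commute power2_norm_eq_inner[symmetric] power2_eq_square)
    have "(mm - g) \<bullet> u \<le> norm (mm - g)"
      using norm_cauchy_schwarz[of "mm - g" u] nu by simp
    then have gu: "g \<bullet> u \<ge> norm mm - norm (mm - g)" using mu by (simp add: inner_diff_left)
    have "norm g \<le> norm mm + norm (mm - g)" using norm_triangle_ineq4[of mm "mm - g"] by simp
    then have gu2: "g \<bullet> u \<ge> norm g - 2 * norm (mm - g)" using gu by linarith
    have gd: "g \<bullet> d = - \<gamma> * (g \<bullet> u)" unfolding d_def by simp
    have "F (w (Suc t)) - F (w t) \<le> g \<bullet> d + (K0 + K1 * norm g) * norm d ^ 2 / 2"
      unfolding wd g_def by (rule descent[OF grad smooth])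
    also have "\<dots> \<le> - \<gamma> * (norm g - 2 * norm (mm - g)) + (K0 + K1 * norm g) * \<gamma> ^ 2 / 2"
      unfolding gd nd using gu2 gamma_pos by (simp add: mult_left_mono)
    finally show ?thesis unfolding g_def mm_def by (simp add: algebra_simps add_divide_distrib)
  qed
  have sum: "(\<Sum>t<T. F (w (Suc t)) - F (w t)) \<le> (\<Sum>t<T. - (\<gamma> - K1 * \<gamma>^2 / 2) * norm (gradF (w t)) + K0 * \<gamma>^2 / 2
               + 2 * \<gamma> * norm (m (Suc t) - gradF (w t)))" for T
    by (rule sum_mono) (rule step)
  have tel: "(\<Sum>t<T. F (w (Suc t)) - F (w t)) = F (w T) - F (w 0)" for T
    by (rule sum_lessThan_telescope)
  have main: "(1 - K1 * \<gamma> / 2) * (\<Sum>t<T. norm (gradF (w t)))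
            \<le> (F (w 0) - F (w T)) / \<gamma> + K0 * real T * \<gamma> / 2
               + 2 * (\<Sum>t<T. norm (m (Suc t) - gradF (w t)))" for T
  proof -
    have "F (w T) - F (w 0) \<le> - (\<gamma> - K1 * \<gamma>^2 / 2) * (\<Sum>t<T. norm (gradF (w t))) + real T * (K0 * \<gamma>^2 / 2)
               + 2 * \<gamma> * (\<Sum>t<T. norm (m (Suc t) - gradF (w t)))" (is ?H)
      using sum[of T] unfolding tel by (simp add: sum.distrib sum_distrib_left)
    then have "\<gamma> * ((1 - K1 * \<gamma> / 2) * (\<Sum>t<T. norm (gradF (w t))))
       \<le> \<gamma> * ((F (w 0) - F (w T)) / \<gamma> + K0 * real T * \<gamma> / 2
               + 2 * (\<Sum>t<T. norm (m (Suc t) - gradF (w t))))"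
    proof -
      have e: "\<gamma> * ((F (w 0) - F (w T)) / \<gamma>) = F (w 0) - F (w T)" using gamma_pos by simp
      show ?thesis unfolding distrib_left e using \<open>?H\<close> by (simp add: algebra_simps power2_eq_square)
    qed
    then show ?thesis using gamma_pos by simp
  qed
  show ?thesis using step main by blast
qed

end
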